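(* In the setting of the context, for all tuples $(T,L)\in\{1,\ldots,L\}\times\mathbb N_+$ and any $u_{\mathrm{cut}}\in\{1,\ldots,p-1\}$, $$\widehat V'^{\,+}_{T,L}(0.5,\rho_{\mathrm{thr}}(u_{\mathrm{cut}}+1))\le\widehat V'^{\,+}_{T,L}(0.5,\rho_{\mathrm{thr}}(u_{\mathrm{cut}})).$$
   Context: Data: $\boldsymbol X=[\boldsymbol x_1\cdots\boldsymbol x_p]\in\mathbb R^{n\times p}$ with standardized columns, $\boldsymbol y\in\mathbb R^n$. T-Rex framework: fix $K,L\ge1$; for $k=1,\ldots,K$ append a dummy matrix $\mathring{\boldsymbol X}_k\in\mathbb R^{n\times L}$ (i.i.d. entries from a univariate distribution with finite mean and variance), run a forward selection method (at most one variable per iteration) on $(\boldsymbol y,[\boldsymbol X\ \mathring{\boldsymbol X}_k])$ and terminate once $t$ dummies are included, $t\in\{1,\ldots,L\}$; $\mathcal C_{k,L}(t)$ = original variables included before termination; $\Phi_{t,L}(j)=\frac1K\sum_k\mathbb 1\{j\in\mathcal C_{k,L}(t)\}$. Dendrogram groups: with $\rho_{j,j'}=\boldsymbol x_j^\top\boldsymbol x_{j'}$, agglomerative hierarchical clustering with distance $1-|\rho|$ (single, complete, or average linkage) gives merge heights $c_1\ge\cdots\ge c_{p-1}$; set $c_0=1$, $c_p=0$, $\rho_{\mathrm{thr}}(u)=1-c_u$ for $u=1,\ldots,p$; $\mathrm{Gr}(j,\rho_{\mathrm{thr}}(u_{\mathrm{cut}}))$ is the set of $j'\neq j$ in the same cluster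 as $j$ when the dendrogram is cut at distance $1-\rho_{\mathrm{thr}}(u_{\mathrm{cut}})$. For $t\in\{1,\ldots,T\}$ define $\Psi^+_{t,L}(j,\rho)=\big(2-\min_{j'\in\mathrm{Gr}(j,\rho)}|\Phi_{T,L}(j)-\Phi_{T,L}(j')|\big)^{-1}$ if $\mathrm{Gr}(j,\rho)\ne\varnothing$ and $\Psi^+_{t,L}(j,\rho)=1$ otherwise, and $$\widehat V'^{\,+}_{T,L}(0.5,\rho)=\sum_{t=1}^T\frac{p-\sum_{q=1}^p\Psi^+_{t,L}(q,\rho)\cdot\Phi_{t,L}(q)}{L-(t-1)}.$$ *)

theory Defs
  imports Complex_Main
begin

text \<open>Design matrix X with rows i < n and columns j in 1..p.\<close>

definition col_standardized :: "nat \<Rightarrow> (nat \<Rightarrow> nat \<Rightarrow> real) \<Rightarrow> nat \<Rightarrow> bool" where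
  "col_standardized n X j \<longleftrightarrow> (\<Sum>i<n. X i j) = 0 \<and> (\<Sum>i<n. (X i j)^2) = 1"

definition corr :: "nat \<Rightarrow> (nat \<Rightarrow> nat \<Rightarrow> real) \<Rightarrow> nat \<Rightarrow> nat \<Rightarrow> real" where
  "corr n X j j' = (\<Sum>i<n. X i j * X i j')"

definition corr_dist :: "nat \<Rightarrow> (nat \<Rightarrow> nat \<Rightarrow> real) \<Rightarrow> nat \<Rightarrow> nat \<Rightarrow> real" where
  "corr_dist n X j j' = 1 - \<bar>corr n X j j'\<bar>"

text \<open>A forward-selection path on [X, dummies] is the list of variables in the order
  they are included (one per iteration). Original variables are 1..p, dummies p+1..p+L.
  The run is terminated once t dummies are included.\<close>

fun stop_at_dummies :: "nat \<Rightarrow> nat \<Rightarrow> nat list \<Rightarrow> nat list" where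
  "stop_at_dummies p t [] = []"
| "stop_at_dummies p t (x # xs) =
     (if p < x then (if t \<le> 1 then [x] else x # stop_at_dummies p (t - 1) xs)
      else x # stop_at_dummies p t xs)"

definition trex_C :: "nat \<Rightarrow> nat list \<Rightarrow> nat \<Rightarrow> nat set" where
  "trex_C p path t = {j \<in> set (stop_at_dummies p t path). 1 \<le> j \<and> j \<le> p}"

definition valid_path :: "nat \<Rightarrow> nat \<Rightarrow> nat list \<Rightarrow> bool" where
  "valid_path p L path \<longleftrightarrow> distinct path \<and> set path \<subseteq> {1..p + L}"

definition trex_Phi :: "nat \<Rightarrow> nat \<Rightarrow> (nat \<Rightarrow> nat list) \<Rightarrow> nat \<Rightarrow> nat \<Rightarrow> real" where
  "trex_Phi K p paths t j = (1 / real K) * (\<Sum>k = 1..K. if j \<in> trex_C p (paths k) t then 1 else 0)"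

datatype linkage = Single | Complete | Average

definition linkage_dist :: "linkage \<Rightarrow> (nat \<Rightarrow> nat \<Rightarrow> real) \<Rightarrow> nat set \<Rightarrow> nat set \<Rightarrow> real" where
  "linkage_dist lk d A B = (case lk of
      Single \<Rightarrow> Min {d a b | a b. a \<in> A \<and> b \<in> B}
    | Complete \<Rightarrow> Max {d a b | a b. a \<in> A \<and> b \<in> B}
    | Average \<Rightarrow> (\<Sum>a\<in>A. \<Sum>b\<in>B. d a b) / (real (card A) * real (card B)))"

definition agg_step :: "linkage \<Rightarrow> (nat \<Rightarrow> nat \<Rightarrow> real) \<Rightarrow> nat set set \<Rightarrow> nat set set \<Rightarrow> real \<Rightarrow> bool" where
  "agg_step lk d P P' h \<longleftrightarrow> (\<exists>A B. A \<in> P \<and> B \<in> P \<and> A \<noteq> B \<and>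
      h = linkage_dist lk d A B \<and>
      (\<forall>A'\<in>P. \<forall>B'\<in>P. A' \<noteq> B' \<longrightarrow> h \<le> linkage_dist lk d A' B') \<and>
      P' = insert (A \<union> B) (P - {A, B}))"

text \<open>A full run on variables 1..p: Pseq i is the partition after i merges,
  hs i the height of merge number i+1 (in the order of the algorithm), i < p-1.\<close>
definition agg_run :: "linkage \<Rightarrow> (nat \<Rightarrow> nat \<Rightarrow> real) \<Rightarrow> nat \<Rightarrow> (nat \<Rightarrow> nat set set) \<Rightarrow> (nat \<Rightarrow> real) \<Rightarrow> bool" where
  "agg_run lk d p Pseq hs \<longleftrightarrow> Pseq 0 = {{j} | j. j \<in> {1..p}} \<and>
      (\<forall>i < p - 1. agg_step lk d (Pseq i) (Pseq (Suc i)) (hs i))"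

definition dend_c :: "nat \<Rightarrow> (nat \<Rightarrow> real) \<Rightarrow> nat \<Rightarrow> real" where
  "dend_c p hs u = (if u = 0 then 1 else if p \<le> u then 0
                    else rev (sort (map hs [0..<p - 1])) ! (u - 1))"

definition rho_thr :: "nat \<Rightarrow> (nat \<Rightarrow> real) \<Rightarrow> nat \<Rightarrow> real" where
  "rho_thr p hs u = 1 - dend_c p hs u"

text \<open>Cutting the dendrogram at distance delta: perform all merges of height \<le> delta.\<close>
definition cut_partition :: "nat \<Rightarrow> (nat \<Rightarrow> nat set set) \<Rightarrow> (nat \<Rightarrow> real) \<Rightarrow> real \<Rightarrow> nat set set" where
  "cut_partition p Pseq hs \<delta> = Pseq (card {i. i < p - 1 \<and> hs i \<le> \<delta>})"

definition Gr :: "nat \<Rightarrow> (nat \<Rightarrow> nat set set) \<Rightarrow> (nat \<Rightarrow> real) \<Rightarrow> nat \<Rightarrow> real \<Rightarrow> nat set" where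
  "Gr p Pseq hs j \<rho> = {j'. j' \<noteq> j \<and> (\<exists>Cl \<in> cut_partition p Pseq hs (1 - \<rho>). j \<in> Cl \<and> j' \<in> Cl)}"

definition Psi_plus :: "(nat \<Rightarrow> real) \<Rightarrow> nat set \<Rightarrow> nat \<Rightarrow> real" where
  "Psi_plus PhiT G j = (if G = {} then 1
      else 1 / (2 - Min {\<bar>PhiT j - PhiT j'\<bar> | j'. j' \<in> G}))"

definition V_hat_plus :: "nat \<Rightarrow> nat \<Rightarrow> (nat \<Rightarrow> nat list) \<Rightarrow> nat \<Rightarrow> nat \<Rightarrow>
    (nat \<Rightarrow> nat set set) \<Rightarrow> (nat \<Rightarrow> real) \<Rightarrow> real \<Rightarrow> real" where
  "V_hat_plus K p paths T L Pseq hs \<rho> =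
     (\<Sum>t = 1..T. (real p - (\<Sum>q = 1..p.
         Psi_plus (trex_Phi K p paths T) (Gr p Pseq hs q \<rho>) q * trex_Phi K p paths t q))
       / (real L - (real t - 1)))"

end

theory Submission
  imports Defs
begin

lemma ind_sum_card:
  fixes A :: "nat set" assumes "finite A"
  shows "(\<Sum>k\<in>A. if P k then 1 else 0) = real (card {k\<in>A. P k})"
  using assms by (simp add: sum.If_cases Int_def)

lemma Phi_bounds:
  assumes "K \<ge> 1"
  shows "0 \<le> trex_Phi K p paths t j \<and> trex_Phi K p paths t j \<le> 1"
proof -
  have c: "card {k\<in>{1..K}. j \<in> trex_C p (paths k) t} \<le> K"
  proof -
    have "card {k\<in>{1..K}. j \<in> trex_C p (paths k) t} \<le> card {1..K}" by (rule card_mono) auto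
    then show ?thesis by simp
  qed
  show ?thesis using assms c unfolding trex_Phi_def ind_sum_card[OF finite_atLeastAtMost]
    by (simp add: field_simps)
qed

lemma Phi_range:
  "range (trex_Phi K p paths t) \<subseteq> (\<lambda>c. 1 / real K * real c) ` {..K}"
proof
  fix x assume "x \<in> range (trex_Phi K p paths t)"
  then obtain j where x: "x = trex_Phi K p paths t j" by auto
  have c: "card {k\<in>{1..K}. j \<in> trex_C p (paths k) t} \<le> K"
  proof -
    have "card {k\<in>{1..K}. j \<in> trex_C p (paths k) t} \<le> card {1..K}" by (rule card_mono) auto
    then show ?thesis by simp
  qed
  show "x \<in> (\<lambda>c. 1 / real K * real c) ` {..K}"
    using c unfolding x trex_Phi_def ind_sum_card[OF finite_atLeastAtMost] by auto
qed

lemma psi_mono: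
  assumes sub: "G1 \<subseteq> G2" and b: "\<And>j. 0 \<le> f j \<and> f j \<le> (1::real)" and fin: "finite (range f)"
  shows "Psi_plus f G2 j \<le> Psi_plus f G1 j"
proof -
  define S where "S G = {\<bar>f j - f j'\<bar> | j'. j' \<in> G}" for G
  have finS: "finite (S G)" for G
  proof -
    have "S G \<subseteq> (\<lambda>v. \<bar>f j - v\<bar>) ` range f" unfolding S_def by auto
    thus ?thesis using fin by (meson finite_imageI finite_subset)
  qed
  have Sb: "x \<in> S G \<Longrightarrow> 0 \<le> x \<and> x \<le> 1" for x G
    unfolding S_def using b by (auto simp: abs_le_iff) (smt (verit) b)+
  have MinS: "G \<noteq> {} \<Longrightarrow> 0 \<le> Min (S G) \<and> Min (S G) \<le> 1" for G
  proof -
    assume "G \<noteq> {}" then have "S G \<noteq> {}" unfolding S_def by auto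
    then have "Min (S G) \<in> S G" using finS by (rule_tac Min_in) auto
    thus ?thesis using Sb by blast
  qed
  show ?thesis
  proof (cases "G1 = {}")
    case True
    show ?thesis
    proof (cases "G2 = {}")
      case True then show ?thesis using \<open>G1 = {}\<close> by (simp add: Psi_plus_def)
    next
      case False
      have "Psi_plus f G2 j = 1 / (2 - Min (S G2))" using False by (simp add: Psi_plus_def S_def)
      also have "\<dots> \<le> 1" using MinS[OF False] by simp
      finally show ?thesis using True by (simp add: Psi_plus_def)
    qed
  next
    case False
    then have F2: "G2 \<noteq> {}" using sub by auto
    have "S G1 \<subseteq> S G2" "S G1 \<noteq> {}" using sub False unfolding S_def by auto
    then have le: "Min (S G2) \<le> Min (S G1)" by (rule Min_antimono) (use finS in auto)
    have "Psi_plus f G2 j = 1 / (2 - Min (S G2))" using F2 by (simp add: Psi_plus_def S_def)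
    also have "\<dots> \<le> 1 / (2 - Min (S G1))"
      using le MinS[OF False] by (intro divide_left_mono) auto
    also have "\<dots> = Psi_plus f G1 j" using False by (simp add: Psi_plus_def S_def)
    finally show ?thesis .
  qed
qed


lemma agg_step_D:
  "agg_step lk d P P' h \<Longrightarrow> \<exists>A B. A \<in> P \<and> B \<in> P \<and> P' = insert (A \<union> B) (P - {A, B})"
  unfolding agg_step_def by (elim exE conjE) (intro exI conjI, assumption+)

lemma agg_step_D2:
  "agg_step lk d P P' h \<Longrightarrow> \<exists>A B. A \<in> P \<and> B \<in> P \<and> h = linkage_dist lk d A B"
  unfolding agg_step_def by (elim exE conjE) (intro exI conjI, assumption+)

lemma run0: "agg_run lk d p Pseq hs \<Longrightarrow> Pseq 0 = {{j} | j. j \<in> {1..p}}"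
  unfolding agg_run_def by (elim conjE)

lemma runS: "agg_run lk d p Pseq hs \<Longrightarrow> i < p - 1 \<Longrightarrow> agg_step lk d (Pseq i) (Pseq (Suc i)) (hs i)"
  unfolding agg_run_def by blast

lemma agg_inv:
  assumes run: "agg_run lk d p Pseq hs"
  shows "i \<le> p - 1 \<Longrightarrow> \<forall>C\<in>Pseq i. C \<noteq> {} \<and> C \<subseteq> {1..p}"
proof (induction i)
  case 0 show ?case unfolding run0[OF run] by blast
next
  case (Suc i)
  then have IH: "\<forall>C\<in>Pseq i. C \<noteq> {} \<and> C \<subseteq> {1..p}" and lt: "i < p - 1" by auto
  obtain A B where AB: "A \<in> Pseq i" "B \<in> Pseq i" "Pseq (Suc i) = insert (A \<union> B) (Pseq i - {A, B})"
    using agg_step_D[OF runS[OF run lt]] by (elim exE conjE) (rule that)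
  have "A \<noteq> {}" "A \<subseteq> {1..p}" "B \<subseteq> {1..p}" using IH AB(1,2) by auto
  then show ?case unfolding AB(3) using IH by blast
qed

lemma agg_refine:
  assumes run: "agg_run lk d p Pseq hs"
  shows "m1 \<le> m2 \<Longrightarrow> m2 \<le> p - 1 \<Longrightarrow> \<forall>C\<in>Pseq m1. \<exists>C'\<in>Pseq m2. C \<subseteq> C'"
proof (induction m2)
  case 0 then show ?case by auto
next
  case (Suc m)
  show ?case
  proof (cases "m1 = Suc m")
    case True then show ?thesis by auto
  next
    case False
    then have IH: "\<forall>C\<in>Pseq m1. \<exists>C'\<in>Pseq m. C \<subseteq> C'" and lt: "m < p - 1" using Suc by auto
    obtain A B where AB: "A \<in> Pseq m" "B \<in> Pseq m" "Pseq (Suc m) = insert (A \<union> B) (Pseq m - {A, B})"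
      using agg_step_D[OF runS[OF run lt]] by (elim exE conjE) (rule that)
    have step: "\<exists>C'\<in>Pseq (Suc m). C \<subseteq> C'" if "C \<in> Pseq m" for C
    proof (cases "C = A \<or> C = B")
      case True then show ?thesis unfolding AB(3) by blast
    next
      case False then show ?thesis unfolding AB(3) using that by blast
    qed
    show ?thesis
    proof
      fix C assume "C \<in> Pseq m1"
      then obtain C1 where "C1 \<in> Pseq m" "C \<subseteq> C1" using IH by blast
      then obtain C2 where "C2 \<in> Pseq (Suc m)" "C1 \<subseteq> C2" using step by blast
      then show "\<exists>C'\<in>Pseq (Suc m). C \<subseteq> C'" using \<open>C \<subseteq> C1\<close> by blast
    qed
  qed
qed

lemma corr_dist_nonneg:
  assumes "col_standardized n X a" "col_standardized n X b"
  shows "0 \<le> corr_dist n X a b"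
proof -
  have "\<bar>corr n X a b\<bar> \<le> (\<Sum>i<n. \<bar>X i a * X i b\<bar>)" unfolding corr_def by (rule sum_abs)
  also have "\<dots> \<le> (\<Sum>i<n. ((X i a)^2 + (X i b)^2) / 2)"
  proof (rule sum_mono)
    fix i
    have "0 \<le> (\<bar>X i a\<bar> - \<bar>X i b\<bar>)^2" by simp
    then show "\<bar>X i a * X i b\<bar> \<le> ((X i a)^2 + (X i b)^2) / 2"
      by (simp add: power2_eq_square abs_mult algebra_simps)
  qed
  also have "\<dots> = ((\<Sum>i<n. (X i a)^2) + (\<Sum>i<n. (X i b)^2)) / 2"
    by (simp add: sum_divide_distrib[symmetric] sum.distrib)
  also have "\<dots> = 1" using assms unfolding col_standardized_def by simp
  finally show ?thesis unfolding corr_dist_def by simp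
qed

lemma hs_nonneg:
  assumes std: "\<forall>j \<in> {1..p}. col_standardized n X j"
    and run: "agg_run lk (corr_dist n X) p Pseq hs" and i: "i < p - 1"
  shows "0 \<le> hs i"
proof -
  obtain A B where AB: "A \<in> Pseq i" "B \<in> Pseq i" "hs i = linkage_dist lk (corr_dist n X) A B"
    using agg_step_D2[OF runS[OF run i]] by (elim exE conjE) (rule that)
  have inv: "\<forall>C\<in>Pseq i. C \<noteq> {} \<and> C \<subseteq> {1..p}" using agg_inv[OF run, of i] i by simp
  then have A: "A \<noteq> {}" "A \<subseteq> {1..p}" and B: "B \<noteq> {}" "B \<subseteq> {1..p}" using AB by auto
  then have fA: "finite A" and fB: "finite B" by (auto intro: finite_subset)
  have nn: "a \<in> A \<Longrightarrow> b \<in> B \<Longrightarrow> 0 \<le> corr_dist n X a b" for a b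
    using A B std by (intro corr_dist_nonneg) auto
  define S where "S = {corr_dist n X a b | a b. a \<in> A \<and> b \<in> B}"
  have S_eq: "S = (\<lambda>(a,b). corr_dist n X a b) ` (A \<times> B)" unfolding S_def by (auto simp: image_def)
  have fS: "finite S" unfolding S_eq using fA fB by simp
  have neS: "S \<noteq> {}" unfolding S_eq using A B by simp
  have Snn: "\<forall>x\<in>S. 0 \<le> x" unfolding S_def using nn by blast
  show ?thesis
  proof (cases lk)
    case Single
    then have "hs i = Min S" using AB unfolding linkage_dist_def S_def by simp
    then show ?thesis using Snn fS neS by simp
  next
    case Complete
    then have "hs i = Max S" using AB unfolding linkage_dist_def S_def by simp
    then show ?thesis using Snn fS neS Max_in[OF fS neS] by simp
  next
    case Average
    then have "hs i = (\<Sum>a\<in>A. \<Sum>b\<in>B. corr_dist n X a b) / (real (card A) * real (card B))"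
      using AB unfolding linkage_dist_def by simp
    moreover have "0 \<le> (\<Sum>a\<in>A. \<Sum>b\<in>B. corr_dist n X a b)" using nn by (intro sum_nonneg) auto
    ultimately show ?thesis by simp
  qed
qed

lemma dend_c_mono:
  assumes nn: "\<And>i. i < p - 1 \<Longrightarrow> 0 \<le> hs i" and u: "1 \<le> u" "u \<le> p - 1"
  shows "dend_c p hs (Suc u) \<le> dend_c p hs u"
proof -
  define xs where "xs = rev (sort (map hs [0..<p - 1]))"
  have len: "length xs = p - 1" unfolding xs_def by simp
  have sw: "sorted_wrt (\<ge>) xs" unfolding xs_def by (simp add: sorted_wrt_rev)
  have cu: "dend_c p hs u = xs ! (u - 1)" using u unfolding dend_c_def xs_def by auto
  show ?thesis
  proof (cases "Suc u < p")
    case True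
    then have "dend_c p hs (Suc u) = xs ! u" unfolding dend_c_def xs_def by auto
    moreover have "xs ! (u - 1) \<ge> xs ! u"
      using sorted_wrt_nth_less[OF sw, of "u - 1" u] u True len by auto
    ultimately show ?thesis using cu by simp
  next
    case False
    then have "dend_c p hs (Suc u) = 0" unfolding dend_c_def by auto
    moreover have "xs ! (u - 1) \<in> set xs" using u len by auto
    then have "xs ! (u - 1) \<in> hs ` {0..<p - 1}" unfolding xs_def by simp
    then have "0 \<le> xs ! (u - 1)" using nn by auto
    ultimately show ?thesis using cu by simp
  qed
qed

theorem lemma3:
  fixes n p K L T u_cut :: nat
    and X :: "nat \<Rightarrow> nat \<Rightarrow> real"
    and lk :: linkage
    and Pseq :: "nat \<Rightarrow> nat set set"
    and hs :: "nat \<Rightarrow> real"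
    and paths :: "nat \<Rightarrow> nat list"
  assumes "\<forall>j \<in> {1..p}. col_standardized n X j"
    and "K \<ge> 1" and "L \<ge> 1" and "1 \<le> T" and "T \<le> L"
    and "\<forall>k \<in> {1..K}. valid_path p L (paths k)"
    and "agg_run lk (corr_dist n X) p Pseq hs"
    and "1 \<le> u_cut" and "u_cut \<le> p - 1"
  shows "V_hat_plus K p paths T L Pseq hs (rho_thr p hs (u_cut + 1))
           \<le> V_hat_plus K p paths T L Pseq hs (rho_thr p hs u_cut)"
proof -
  note std = assms(1) and run = assms(7)
  define m where "m u = card {i. i < p - 1 \<and> hs i \<le> dend_c p hs u}" for u
  have cmono: "dend_c p hs (Suc u_cut) \<le> dend_c p hs u_cut"
    using dend_c_mono[OF hs_nonneg[OF std run]] assms(8,9) by auto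
  have mle: "m (Suc u_cut) \<le> m u_cut" unfolding m_def
    by (rule card_mono) (use cmono in auto)
  have mp: "m u_cut \<le> p - 1" unfolding m_def
    using card_mono[of "{..<p-1}" "{i. i < p - 1 \<and> hs i \<le> dend_c p hs u_cut}"] by auto
  have Gr_eq: "Gr p Pseq hs q (rho_thr p hs u) = {j'. j' \<noteq> q \<and> (\<exists>Cl \<in> Pseq (m u). q \<in> Cl \<and> j' \<in> Cl)}" for q u
    unfolding Gr_def cut_partition_def rho_thr_def m_def by simp
  have Grsub: "Gr p Pseq hs q (rho_thr p hs (u_cut + 1)) \<subseteq> Gr p Pseq hs q (rho_thr p hs u_cut)" for q
  proof -
    have "\<forall>C\<in>Pseq (m (Suc u_cut)). \<exists>C'\<in>Pseq (m u_cut). C \<subseteq> C'"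
      using agg_refine[OF run mle mp] .
    then show ?thesis unfolding Gr_eq
    proof (intro subsetI, elim CollectE conjE bexE)
      fix j' Cl assume R: "\<forall>C\<in>Pseq (m (Suc u_cut)). \<exists>C'\<in>Pseq (m u_cut). C \<subseteq> C'"
        and j: "j' \<noteq> q" "Cl \<in> Pseq (m (u_cut + 1))" "q \<in> Cl" "j' \<in> Cl"
      obtain C' where "C' \<in> Pseq (m u_cut)" "Cl \<subseteq> C'" using R j(2) by auto
      then show "j' \<in> {j'. j' \<noteq> q \<and> (\<exists>Cl\<in>Pseq (m u_cut). q \<in> Cl \<and> j' \<in> Cl)}"
        using j by blast
    qed
  qed
  define Phi where "Phi = trex_Phi K p paths"
  have Pb: "0 \<le> Phi t j \<and> Phi t j \<le> 1" for t j unfolding Phi_def using Phi_bounds assms(2) by blast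
  have Pfin: "finite (range (Phi t))" for t
    unfolding Phi_def by (rule finite_subset[OF Phi_range]) auto
  have psi: "Psi_plus (Phi T) (Gr p Pseq hs q (rho_thr p hs u_cut)) q
           \<le> Psi_plus (Phi T) (Gr p Pseq hs q (rho_thr p hs (u_cut + 1))) q" for q
    by (rule psi_mono[OF Grsub Pb Pfin])
  show ?thesis unfolding V_hat_plus_def Phi_def[symmetric]
  proof (rule sum_mono)
    fix t assume t: "t \<in> {1..T}"
    have den: "0 < real L - (real t - 1)" using t assms(5) by auto
    have "(\<Sum>q = 1..p. Psi_plus (Phi T) (Gr p Pseq hs q (rho_thr p hs u_cut)) q * Phi t q)
        \<le> (\<Sum>q = 1..p. Psi_plus (Phi T) (Gr p Pseq hs q (rho_thr p hs (u_cut + 1))) q * Phi t q)"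
      by (intro sum_mono mult_right_mono psi) (use Pb in auto)
    then show "(real p - (\<Sum>q = 1..p. Psi_plus (Phi T) (Gr p Pseq hs q (rho_thr p hs (u_cut + 1))) q * Phi t q)) /
          (real L - (real t - 1))
         \<le> (real p - (\<Sum>q = 1..p. Psi_plus (Phi T) (Gr p Pseq hs q (rho_thr p hs u_cut)) q * Phi t q)) /
          (real L - (real t - 1))"
      using den by (intro divide_right_mono) auto
  qed
qed

end
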